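(* Every graph $G$ satisfies $\chi'_{qm}(G)\le 3$.
   Context: All graphs are simple and finite. A $k$-edge-coloring of $G$ is any map $c:E(G)\to\{1,\dots,k\}$ (adjacent edges may share colors). It is quasi-majority if every vertex $v$ is incident to at most $\lceil d(v)/2\rceil$ edges of each single color. $\chi'_{qm}(G)$ denotes the least $k$ such that $G$ has a quasi-majority $k$-edge-coloring. *)

theory Defs
  imports Complex_Main
begin

definition simple_graph :: "'a set \<Rightarrow> 'a set set \<Rightarrow> bool" where
  "simple_graph V E \<longleftrightarrow> finite V \<and> (\<forall>e\<in>E. e \<subseteq> V \<and> card e = 2)"

definition incident_edges :: "'a set set \<Rightarrow> 'a \<Rightarrow> 'a set set" where
  "incident_edges E v = {e \<in> E. v \<in> e}"

definition degree :: "'a set set \<Rightarrow> 'a \<Rightarrow> nat" where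
  "degree E v = card (incident_edges E v)"

definition edge_coloring :: "'a set set \<Rightarrow> nat \<Rightarrow> ('a set \<Rightarrow> nat) \<Rightarrow> bool" where
  "edge_coloring E k c \<longleftrightarrow> (\<forall>e\<in>E. c e \<in> {1..k})"

definition quasi_majority :: "'a set \<Rightarrow> 'a set set \<Rightarrow> ('a set \<Rightarrow> nat) \<Rightarrow> bool" where
  "quasi_majority V E c \<longleftrightarrow>
     (\<forall>v\<in>V. \<forall>i. card {e \<in> incident_edges E v. c e = i} \<le> nat \<lceil>real (degree E v) / 2\<rceil>)"

definition chi_qm :: "'a set \<Rightarrow> 'a set set \<Rightarrow> nat" where
  "chi_qm V E = (LEAST k. \<exists>c. edge_coloring E k c \<and> quasi_majority V E c)"

end

theory Submission
  imports Defs
begin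

lemma half_ceil: "nat \<lceil>real d / 2\<rceil> = (d + 1) div 2"
proof (cases "even d")
  case True
  then obtain k where "d = 2*k" by blast
  then show ?thesis by simp
next
  case False
  then obtain k where k: "d = 2*k+1" using oddE by blast
  have "\<lceil>real d / 2\<rceil> = int k + 1"
    by (rule ceiling_unique) (auto simp: k)
  then show ?thesis using k by simp
qed

lemma two_elem:
  assumes "card e = 2" "u \<in> e" "v \<in> e" "u \<noteq> v"
  shows "e = {u, v}"
proof -
  obtain a b where "a \<noteq> b" "e = {a,b}" using assms(1) by (meson card_2_iff)
  then show ?thesis using assms(2-4) by auto
qed

lemma greedy:
  fixes S :: "'b set" and L :: "'b \<Rightarrow> nat set"
  assumes "finite S" "card S \<le> 2*m"
    "\<forall>x\<in>S. \<exists>a b. a \<noteq> b \<and> a \<in> L x \<and> b \<in> L x \<and> a \<in> {1..3} \<and> b \<in> {1..3}"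
  shows "\<exists>g. (\<forall>x\<in>S. g x \<in> L x \<and> g x \<in> {1..3}) \<and> (\<forall>i. card {x\<in>S. g x = i} \<le> m)"
  using assms
proof (induction S rule: finite_induct)
  case empty
  then show ?case by auto
next
  case (insert x S)
  then have cS: "card S + 1 \<le> 2*m" by simp
  from insert obtain g where g: "\<forall>y\<in>S. g y \<in> L y \<and> g y \<in> {1..3}" "\<forall>i. card {y\<in>S. g y = i} \<le> m"
    by auto
  from insert obtain a b where ab: "a \<noteq> b" "a \<in> L x" "b \<in> L x" "a \<in> {1..3}" "b \<in> {1..3}"
    by auto
  have "\<exists>c\<in>{a,b}. card {y\<in>S. g y = c} < m"
  proof (rule ccontr)
    assume "\<not> ?thesis"
    then have "card {y\<in>S. g y = a} \<ge> m" "card {y\<in>S. g y = b} \<ge> m" by auto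
    moreover have "card ({y\<in>S. g y = a} \<union> {y\<in>S. g y = b}) = card {y\<in>S. g y = a} + card {y\<in>S. g y = b}"
      by (rule card_Un_disjoint) (use insert ab in auto)
    moreover have "card ({y\<in>S. g y = a} \<union> {y\<in>S. g y = b}) \<le> card S"
      by (rule card_mono) (use insert in auto)
    ultimately show False using cS by linarith
  qed
  then obtain c where c: "c \<in> {a,b}" "card {y\<in>S. g y = c} < m" by blast
  define g' where "g' = g(x := c)"
  have G1: "card {y\<in>insert x S. g' y = i} \<le> m" for i
  proof -
    have eq: "{y\<in>insert x S. g' y = i} = (if c = i then insert x {y\<in>S. g y = i} else {y\<in>S. g y = i})"
      using insert(2) by (auto simp: g'_def)
    show ?thesis
    proof (cases "c = i")
      case True
      then have "card {y\<in>insert x S. g' y = i} \<le> Suc (card {y\<in>S. g y = i})"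
        unfolding eq using insert(1) by (simp add: card_insert_if)
      moreover have "card {y\<in>S. g y = i} < m" using c(2) True by simp
      ultimately show ?thesis by linarith
    next
      case False
      then show ?thesis unfolding eq using g by simp
    qed
  qed
  have G2: "\<forall>y\<in>insert x S. g' y \<in> L y \<and> g' y \<in> {1..3}"
  proof
    fix y assume y: "y \<in> insert x S"
    show "g' y \<in> L y \<and> g' y \<in> {1..3}"
    proof (cases "y = x")
      case True
      then have "g' y = c" by (simp add: g'_def)
      moreover have "c \<in> L x \<and> c \<in> {1..3}" using c(1) ab by blast
      ultimately show ?thesis using True by simp
    next
      case False
      then have "g' y = g y" "y \<in> S" using y by (auto simp: g'_def)
      then show ?thesis using g(1) by simp
    qed
  qed
  show ?case
    apply (rule exI[of _ g'])
    apply (rule conjI)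
    apply (rule G2)
    apply (rule allI)
    by (rule G1)
qed


lemma main_ind:
  assumes "finite V"
  shows "\<forall>E. (\<forall>e\<in>E. e \<subseteq> V \<and> card e = 2) \<longrightarrow>
     (\<exists>c::'a set \<Rightarrow> nat. (\<forall>e\<in>E. c e \<in> {1..3}) \<and>
        (\<forall>w i. card {e \<in> incident_edges E w. c e = i} \<le> (degree E w + 1) div 2))"
  using assms
proof (induction V rule: finite_induct)
  case empty
  show ?case
  proof (intro allI impI)
    fix E :: "'a set set"
    assume "\<forall>e\<in>E. e \<subseteq> {} \<and> card e = 2"
    then have "E = {}" by (metis card.empty ex_in_conv subset_empty zero_neq_numeral)
    then show "\<exists>c. (\<forall>e\<in>E. c e \<in> {1..3}) \<and>
        (\<forall>w i. card {e \<in> incident_edges E w. c e = i} \<le> (degree E w + 1) div 2)"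
      by (auto simp: incident_edges_def)
  qed
next
  case (insert v F)
  show ?case
  proof (intro allI impI)
    fix E :: "'a set set"
    assume E: "\<forall>e\<in>E. e \<subseteq> insert v F \<and> card e = 2"
    have finE: "finite E"
      by (rule finite_subset[of _ "Pow (insert v F)"]) (use E insert(1) in auto)
    define E' where "E' = {e\<in>E. v \<notin> e}"
    have E'ok: "\<forall>e\<in>E'. e \<subseteq> F \<and> card e = 2" using E by (auto simp: E'_def)
    from insert.IH[rule_format, OF E'ok[rule_format]] obtain c' :: "'a set \<Rightarrow> nat" where c': "\<forall>e\<in>E'. c' e \<in> {1..3}"
      "\<forall>w i. card {e \<in> incident_edges E' w. c' e = i} \<le> (degree E' w + 1) div 2"
      by blast
    define S where "S = incident_edges E v"
    have finS: "finite S" using finE by (simp add: S_def incident_edges_def)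
    have fininc: "finite (incident_edges G w)" if "G \<subseteq> E" for G w
      by (rule finite_subset[OF _ finE]) (use that in \<open>auto simp: incident_edges_def\<close>)
    have E'E: "E' \<subseteq> E" by (auto simp: E'_def)
    define L where "L e = {i. \<forall>u\<in>e. u \<noteq> v \<longrightarrow>
        card {e' \<in> incident_edges E' u. c' e' = i} < (degree E u + 1) div 2}" for e
    have Sform: "\<exists>u. u \<noteq> v \<and> e = {u, v}" if "e \<in> S" for e
    proof -
      have "card e = 2" "v \<in> e" using that E by (auto simp: S_def incident_edges_def)
      then obtain a b where "a \<noteq> b" "e = {a,b}" by (meson card_2_iff)
      then show ?thesis using \<open>v \<in> e\<close> by auto
    qed
    have incu: "incident_edges E u = insert {u,v} (incident_edges E' u)"
      "{u,v} \<notin> incident_edges E' u"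
      if uv: "u \<noteq> v" "{u,v} \<in> E" for u
    proof -
      have eq: "e = {u,v}" if "e \<in> E" "u \<in> e" "v \<in> e" for e
        using two_elem[of e u v] E that uv(1) by blast
      show "incident_edges E u = insert {u,v} (incident_edges E' u)"
      proof (rule equalityI; rule subsetI)
        fix e assume "e \<in> incident_edges E u"
        then have e: "e \<in> E" "u \<in> e" by (auto simp: incident_edges_def)
        show "e \<in> insert {u,v} (incident_edges E' u)"
        proof (cases "v \<in> e")
          case True
          then show ?thesis using eq[OF e True] by simp
        next
          case False
          then show ?thesis using e by (simp add: incident_edges_def E'_def)
        qed
      next
        fix e assume "e \<in> insert {u,v} (incident_edges E' u)"
        then show "e \<in> incident_edges E u" using uv(2) by (auto simp: incident_edges_def E'_def)
      qed
      show "{u,v} \<notin> incident_edges E' u" by (auto simp: incident_edges_def E'_def)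
    qed
    have Lgood: "\<exists>a b. a \<noteq> b \<and> a \<in> L x \<and> b \<in> L x \<and> a \<in> {1..3} \<and> b \<in> {1..3}"
      if xS: "x \<in> S" for x
    proof -
      obtain u where u: "u \<noteq> v" "x = {u,v}" using Sform[OF xS] by blast
      have xE: "{u,v} \<in> E" using xS u by (simp add: S_def incident_edges_def)
      define N where "N = (degree E u + 1) div 2"
      define C where "C (i::nat) = {e' \<in> incident_edges E' u. c' e' = i}" for i
      have dE: "degree E u = degree E' u + 1"
        using incu[OF u(1) xE] fininc[OF E'E] by (simp add: degree_def)
      have Lx: "i \<in> L x \<longleftrightarrow> card (C i) < N" for i
        using u by (auto simp: L_def C_def N_def)
      have two: "\<not> (card (C i) \<ge> N \<and> card (C j) \<ge> N)" if "i \<noteq> j" for i j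
      proof
        assume h: "card (C i) \<ge> N \<and> card (C j) \<ge> N"
        have "card (C i \<union> C j) = card (C i) + card (C j)"
          by (rule card_Un_disjoint) (use fininc[OF E'E] that in \<open>auto simp: C_def\<close>)
        moreover have "card (C i \<union> C j) \<le> degree E' u"
          unfolding degree_def by (rule card_mono) (use fininc[OF E'E] in \<open>auto simp: C_def\<close>)
        ultimately show False using h dE N_def by linarith
      qed
      show ?thesis
      proof (cases "card (C 1) < N")
        case True
        show ?thesis
        proof (cases "card (C 2) < N")
          case True
          then show ?thesis using \<open>card (C 1) < N\<close> Lx by (intro exI[of _ 1] exI[of _ 2]) auto
        next
          case False
          then have "card (C 3) < N" using two[of 2 3] by auto
          then show ?thesis using \<open>card (C 1) < N\<close> Lx by (intro exI[of _ 1] exI[of _ 3]) auto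
        qed
      next
        case False
        then have "card (C 2) < N" "card (C 3) < N" using two[of 1 2] two[of 1 3] by auto
        then show ?thesis using Lx by (intro exI[of _ 2] exI[of _ 3]) auto
      qed
    qed
    have "card S \<le> 2 * ((degree E v + 1) div 2)" by (simp add: S_def degree_def)
    from greedy[OF finS this] Lgood obtain g where
      g: "\<forall>x\<in>S. g x \<in> L x \<and> g x \<in> {1..3}" "\<forall>i. card {x\<in>S. g x = i} \<le> (degree E v + 1) div 2"
      by blast
    define c where "c e = (if v \<in> e then g e else c' e)" for e
    have col: "\<forall>e\<in>E. c e \<in> {1..3}"
      using g c' by (auto simp: c_def S_def incident_edges_def E'_def)
    have qm: "card {e \<in> incident_edges E w. c e = i} \<le> (degree E w + 1) div 2" for w i
    proof (cases "w = v")
      case True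
      have "{e \<in> incident_edges E w. c e = i} = {x\<in>S. g x = i}"
        using True by (auto simp: S_def c_def incident_edges_def)
      then show ?thesis using g True by simp
    next
      case False
      show ?thesis
      proof (cases "{w,v} \<in> E")
        case True
        have eq: "{e \<in> incident_edges E w. c e = i} = (if g {w,v} = i then insert {w,v}
            {e \<in> incident_edges E' w. c' e = i} else {e \<in> incident_edges E' w. c' e = i})"
          unfolding incu[OF False True] by (auto simp: c_def incident_edges_def E'_def)
        have dE: "degree E w = degree E' w + 1"
          using incu[OF False True] fininc[OF E'E] by (simp add: degree_def)
        have wS: "{w,v} \<in> S" using True by (simp add: S_def incident_edges_def)
        show ?thesis
        proof (cases "g {w,v} = i")
          case True
          then have "i \<in> L {w,v}" using g wS by auto
          then have "card {e \<in> incident_edges E' w. c' e = i} < (degree E w + 1) div 2"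
            using False by (auto simp: L_def)
          moreover have "finite {e \<in> incident_edges E' w. c' e = i}" using fininc[OF E'E] by simp
          ultimately show ?thesis unfolding eq using True by (simp add: card_insert_if)
        next
          case F2: False
          have "card {e \<in> incident_edges E' w. c' e = i} \<le> (degree E' w + 1) div 2" using c' by blast
          also have "\<dots> \<le> (degree E w + 1) div 2" using dE by simp
          finally show ?thesis unfolding eq using F2 by simp
        qed
      next
        case NE: False
        have ie: "incident_edges E w = incident_edges E' w"
        proof -
          have "v \<notin> e" if "e \<in> E" "w \<in> e" for e
          proof
            assume "v \<in> e"
            have "card e = 2" using E that by auto
            then obtain a b where "a \<noteq> b" "e = {a,b}" by (meson card_2_iff)
            then have "e = {w,v}" using \<open>v \<in> e\<close> that(2) False by auto
            then show False using NE that by simp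
          qed
          then show ?thesis by (auto simp: incident_edges_def E'_def)
        qed
        have "{e \<in> incident_edges E w. c e = i} = {e \<in> incident_edges E' w. c' e = i}"
          unfolding ie by (auto simp: c_def incident_edges_def E'_def)
        then show ?thesis using c' ie by (simp add: degree_def)
      qed
    qed
    show "\<exists>c::'a set \<Rightarrow> nat. (\<forall>e\<in>E. c e \<in> {1..3}) \<and>
        (\<forall>w i. card {e \<in> incident_edges E w. c e = i} \<le> (degree E w + 1) div 2)"
      using col qm by (intro exI[of _ c]) blast
  qed
qed

theorem mainTheorem13:
  fixes V :: "'a set" and E :: "'a set set"
  assumes "simple_graph V E"
  shows "chi_qm V E \<le> 3"
proof -
  have fV: "finite V" and EV: "\<forall>e\<in>E. e \<subseteq> V \<and> card e = 2"
    using assms unfolding simple_graph_def by auto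
  have "\<exists>c::'a set \<Rightarrow> nat. (\<forall>e\<in>E. c e \<in> {1..3}) \<and>
        (\<forall>w i. card {e \<in> incident_edges E w. c e = i} \<le> (degree E w + 1) div 2)"
    using main_ind[OF fV] EV by blast
  then obtain c :: "'a set \<Rightarrow> nat" where c1: "\<forall>e\<in>E. c e \<in> {1..3}"
    and c2: "\<forall>w i. card {e \<in> incident_edges E w. c e = i} \<le> (degree E w + 1) div 2" by blast
  have "edge_coloring E 3 c" using c1 unfolding edge_coloring_def by blast
  moreover have "quasi_majority V E c" unfolding quasi_majority_def half_ceil using c2 by blast
  ultimately have "\<exists>c. edge_coloring E 3 c \<and> quasi_majority V E c" by blast
  then show ?thesis unfolding chi_qm_def by (rule Least_le)
qed

end
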